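(* Assume $\beta_x=0$ for all $x\in\Gamma$. Let $v:\Gamma\to\mathbb C$ satisfy $(Jv)(x)=iv(x)$ for all $x\in\Gamma$ and $v(x_0)=1$ for some vertex $x_0$ with $\ell(x_0)=0$. Then $\tilde v(x)=i^{-\ell(x)}v(x)$ is a real and strictly positive number for every $x\in\Gamma$.
   Context: Let $\Gamma$ be an infinite connected tree whose vertices are arranged in levels $\ell(x)\in\{0,1,2,\dots\}$: every vertex $x$ is adjacent to exactly one vertex $x'$ with $\ell(x')=\ell(x)+1$; for $\ell(x)\ge 1$ the set $N_x=\{y:\ y'=x\}$ of neighbours of $x$ on level $\ell(x)-1$ is finite and nonempty; $N_x=\emptyset$ if $\ell(x)=0$; there are no other edges. Fix $\lambda_x>0$, $\beta_x\in\mathbb R$. The Jacobi matrix $J$ acts on functions $v:\Gamma\to\mathbb C$ by $(Jv)(x)=\lambda_x v(x')+\beta_x v(x)+\sum_{y\in N_x}\lambda_y v(y)$. *)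

theory Defs
  imports Complex_Main
begin

text \<open>The vertex set Gamma is the whole type 'a. lev x is the level of x,
  up x is the unique neighbour x' of x on level lev x + 1.
  The edges are exactly the pairs {x, up x}.\<close>

definition children :: "('a \<Rightarrow> 'a) \<Rightarrow> 'a \<Rightarrow> 'a set" where
  "children up x = {y. up y = x}"

definition level_tree :: "('a \<Rightarrow> nat) \<Rightarrow> ('a \<Rightarrow> 'a) \<Rightarrow> bool" where
  "level_tree lev up \<longleftrightarrow>
     infinite (UNIV :: 'a set) \<and>
     (\<forall>x. lev (up x) = lev x + 1) \<and>
     (\<forall>x. lev x \<ge> 1 \<longrightarrow> finite (children up x) \<and> children up x \<noteq> {}) \<and>
     (\<forall>x. lev x = 0 \<longrightarrow> children up x = {}) \<and>
     (\<forall>x y. \<exists>m n. (up ^^ m) x = (up ^^ n) y)"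

definition jacobi :: "('a \<Rightarrow> 'a) \<Rightarrow> ('a \<Rightarrow> real) \<Rightarrow> ('a \<Rightarrow> real) \<Rightarrow> ('a \<Rightarrow> complex) \<Rightarrow> 'a \<Rightarrow> complex" where
  "jacobi up lam beta v x =
     of_real (lam x) * v (up x) + of_real (beta x) * v x
     + (\<Sum>y\<in>children up x. of_real (lam y) * v y)"

end

theory Submission
  imports Defs
begin

theorem lemma4:
  fixes lev :: "'a \<Rightarrow> nat" and up :: "'a \<Rightarrow> 'a"
    and lam beta :: "'a \<Rightarrow> real" and v :: "'a \<Rightarrow> complex" and x0 :: 'a
  assumes "level_tree lev up"
    and "\<forall>x. lam x > 0"
    and "\<forall>x. beta x = 0"
    and "\<forall>x. jacobi up lam beta v x = \<i> * v x"
    and "lev x0 = 0" and "v x0 = 1"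
  shows "\<forall>x. inverse (\<i> ^ lev x) * v x \<in> \<real> \<and> Re (inverse (\<i> ^ lev x) * v x) > 0"
proof -
  define w where "w x = inverse (\<i> ^ lev x) * v x" for x
  have levup: "\<And>x. lev (up x) = lev x + 1" using assms(1) unfolding level_tree_def by blast
  have fin: "\<And>x. lev x \<ge> 1 \<Longrightarrow> finite (children up x)" using assms(1) unfolding level_tree_def by blast
  have ch0: "\<And>x. lev x = 0 \<Longrightarrow> children up x = {}" using assms(1) unfolding level_tree_def by blast
  have conn: "\<And>x y. \<exists>m n. (up ^^ m) x = (up ^^ n) y" using assms(1) unfolding level_tree_def by blast
  have vw: "\<And>z. v z = \<i> ^ lev z * w z" unfolding w_def by simp
  have rec: "of_real (lam x) * w (up x) = w x + (\<Sum>y\<in>children up x. of_real (lam y) * w y)" for x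
  proof -
    let ?p = "\<i> ^ (lev x + 1)"
    have chl: "\<And>y. y \<in> children up x \<Longrightarrow> \<i> ^ lev y = - ?p"
    proof -
      fix y assume "y \<in> children up x"
      then have "lev x = lev y + 1" using levup unfolding children_def by force
      then have "?p = \<i> ^ lev y * \<i>^2" by (simp add: power_add)
      then show "\<i> ^ lev y = - ?p" by simp
    qed
    have "jacobi up lam beta v x = \<i> * v x" using assms(4) by blast
    then have "of_real (lam x) * v (up x) + (\<Sum>y\<in>children up x. of_real (lam y) * v y) = \<i> * v x"
      using assms(3) unfolding jacobi_def by simp
    moreover have "(\<Sum>y\<in>children up x. of_real (lam y) * v y) = ?p * (- (\<Sum>y\<in>children up x. of_real (lam y) * w y))"
      unfolding sum_distrib_left sum_negf[symmetric] by (rule sum.cong) (simp_all add: vw chl)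
    moreover have "v (up x) = ?p * w (up x)" using vw levup by simp
    moreover have "\<i> * v x = ?p * w x" using vw by simp
    ultimately have "?p * (of_real (lam x) * w (up x) - (\<Sum>y\<in>children up x. of_real (lam y) * w y)) = ?p * w x"
      by (simp add: algebra_simps)
    then have "of_real (lam x) * w (up x) - (\<Sum>y\<in>children up x. of_real (lam y) * w y) = w x" by simp
    then show ?thesis by (simp add: algebra_simps)
  qed
  have Q: "\<exists>a>0. w (up z) = of_real a * w z" for z
  proof (induction "lev z" arbitrary: z rule: less_induct)
    case less
    have lx: "lam z > 0" using assms(2) by blast
    show ?case
    proof (cases "lev z = 0")
      case True
      then have "of_real (lam z) * w (up z) = w z" using rec[of z] ch0 by simp
      then have "w (up z) = of_real (1 / lam z) * w z" using lx
        by (simp add: field_simps)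
      then show ?thesis using lx by (intro exI[of _ "1 / lam z"]) auto
    next
      case False
      have "\<forall>c\<in>children up z. \<exists>a>0. w z = of_real a * w c"
      proof
        fix c assume "c \<in> children up z"
        then have "up c = z" unfolding children_def by simp
        then have "lev c < lev z" using levup[of c] by simp
        then show "\<exists>a>0. w z = of_real a * w c" using less \<open>up c = z\<close> by blast
      qed
      then obtain a where a: "\<And>c. c \<in> children up z \<Longrightarrow> a c > 0 \<and> w z = of_real (a c) * w c"
        by metis
      have "(\<Sum>y\<in>children up z. of_real (lam y) * w y) = (\<Sum>y\<in>children up z. of_real (lam y / a y) * w z)"
      proof (rule sum.cong)
        fix y assume "y \<in> children up z"
        then have "a y > 0" "w z = of_real (a y) * w y" using a by auto
        then show "of_real (lam y) * w y = of_real (lam y / a y) * w z" by simp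
      qed simp
      also have "\<dots> = of_real (\<Sum>y\<in>children up z. lam y / a y) * w z"
        by (simp add: sum_distrib_right)
      finally have "of_real (lam z) * w (up z) = of_real (1 + (\<Sum>y\<in>children up z. lam y / a y)) * w z"
        using rec[of z] by (simp add: algebra_simps)
      then have eq: "w (up z) = of_real ((1 + (\<Sum>y\<in>children up z. lam y / a y)) / lam z) * w z"
        using lx by (simp add: field_simps)
      have "(\<Sum>y\<in>children up z. lam y / a y) \<ge> 0"
        using a assms(2) by (intro sum_nonneg) (simp add: less_imp_le)
      then have "(1 + (\<Sum>y\<in>children up z. lam y / a y)) / lam z > 0" using lx by simp
      then show ?thesis using eq by blast
    qed
  qed
  have Qn: "\<exists>a>0. w ((up ^^ n) z) = of_real a * w z" for n z
  proof (induction n)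
    case 0 then show ?case by (intro exI[of _ 1]) simp
  next
    case (Suc n)
    then obtain a where a: "a > 0" "w ((up ^^ n) z) = of_real a * w z" by blast
    obtain b where b: "b > 0" "w (up ((up ^^ n) z)) = of_real b * w ((up ^^ n) z)" using Q by blast
    show ?case using a b by (intro exI[of _ "b * a"]) simp
  qed
  have w0: "w x0 = 1" unfolding w_def using assms(5,6) by simp
  show ?thesis
  proof
    fix x
    obtain m n where mn: "(up ^^ m) x = (up ^^ n) x0" using conn by blast
    obtain a where a: "a > 0" "w ((up ^^ m) x) = of_real a * w x" using Qn by blast
    obtain b where b: "b > 0" "w ((up ^^ n) x0) = of_real b * w x0" using Qn by blast
    have "of_real a * w x = of_real b" using a b mn w0 by simp
    then have "w x = of_real (b / a)" using a by (simp add: field_simps)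
    moreover have "b / a > 0" using a b by simp
    ultimately show "inverse (\<i> ^ lev x) * v x \<in> \<real> \<and> Re (inverse (\<i> ^ lev x) * v x) > 0"
      unfolding w_def[symmetric] by simp
  qed
qed

end
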